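(* Let $e$ be a directed edge of $\Gamma$ labeled $y$, not on $T$, from $g$ to $g'=gy$. Write $\gamma=\mathrm{nf}(g)=x^{i_n}y^{\epsilon_n}\cdots x^{i_1}y^{\epsilon_1}x^{i_0}$ and $\gamma'=\mathrm{nf}(g')=x^{j_{n'}}y^{\varepsilon_{n'}}\cdots x^{j_1}y^{\varepsilon_1}x^{j_0}$, let $s_k=i_k+\cdots+i_0$ ($0\le k\le n$), $s'_k=j_k+\cdots+j_0$ ($0\le k\le n'$), let $m=\min\{k\mid s_k\le0\}$ (or $m=n$ if no such $k$) and $m'=\min\{k\mid s'_k\le1\}$ (or $m'=n'$ if no such $k$). Then $m=m'$, and the sequence of $y$-rule sizes $(s_0,\dots,s_{m-1})$ used in rewriting $\gamma y$ to $\gamma'$ coincides (in order) with the sequence of $y^{-1}$-rule sizes $(s'_0-1,\dots,s'_{m'-1}-1)$ used in rewriting $\gamma' y^{-1}$ to $\gamma$; that is, $s'_k-1=s_k$ for $0\le k\le m-1$.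
   Context: $F$ is Thompson's group with generators $x,y$, $A=\{x^{\pm1},y^{\pm1}\}$, $\Gamma$ its Cayley graph over $A$. Guba–Sapir's convergent rewriting system $\Sigma$ consists of free reductions $aa^{-1}\to\emptyset$ ($a\in A$), the $y$-rules of size $i$: $y^\epsilon x^iy\to x^iyx^{-i-1}y^\epsilon x^{i+1}$, and the $y^{-1}$-rules of size $i$: $y^\epsilon x^{i+1}y^{-1}\to x^{i+1}y^{-1}x^{-i}y^\epsilon x^i$ ($\epsilon\in\{1,-1\}$, $i\ge1$). $\mathcal N$ is the set of $\Sigma$-irreducible words (unique normal forms for $F$), and $\mathrm{nf}(w)$ denotes the word of $\mathcal N$ representing the same element as $w$. $T$ is the subtree of $\Gamma$ whose non-backtracking paths from the identity are labeled exactly by the words of $\mathcal N$. *)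

theory Defs
  imports Main
begin

datatype gen = X | Y

text \<open>A letter is a generator with a sign: (g, True) is g, (g, False) is g^-1.\<close>
type_synonym letter = "gen \<times> bool"
type_synonym word = "letter list"

definition inv_letter :: "letter \<Rightarrow> letter" where
  "inv_letter a = (fst a, \<not> snd a)"

definition xpow :: "int \<Rightarrow> word" where
  "xpow k = (if k \<ge> 0 then replicate (nat k) (X, True) else replicate (nat (- k)) (X, False))"

inductive_set sigma_rules :: "(word \<times> word) set" where
  free_red: "([a, inv_letter a], []) \<in> sigma_rules"
| y_rule: "i \<ge> 1 \<Longrightarrow>
    ([(Y, e)] @ xpow i @ [(Y, True)],
     xpow i @ [(Y, True)] @ xpow (- i - 1) @ [(Y, e)] @ xpow (i + 1)) \<in> sigma_rules"
| yinv_rule: "i \<ge> 1 \<Longrightarrow>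
    ([(Y, e)] @ xpow (i + 1) @ [(Y, False)],
     xpow (i + 1) @ [(Y, False)] @ xpow (- i) @ [(Y, e)] @ xpow i) \<in> sigma_rules"

definition sigma_step :: "(word \<times> word) set" where
  "sigma_step = {(p @ l @ q, p @ r @ q) | p l r q. (l, r) \<in> sigma_rules}"

text \<open>Two words represent the same element of F.  Since Sigma is a (convergent)
  presentation of F, this is the equivalence closure of Sigma-rewriting.\<close>
definition word_eq :: "word \<Rightarrow> word \<Rightarrow> bool" where
  "word_eq u v \<longleftrightarrow> (u, v) \<in> (sigma_step \<union> sigma_step\<inverse>)\<^sup>*"

definition NF_set :: "word set" where
  "NF_set = {w. \<not> (\<exists>v. (w, v) \<in> sigma_step)}"

definition nf :: "word \<Rightarrow> word" where
  "nf w = (THE v. v \<in> NF_set \<and> word_eq w v)"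

text \<open>The directed edge of the Cayley graph from (the element represented by) w, labeled a,
  lies on T iff it is traversed (in either direction) by the non-backtracking path from
  the identity labeled by some word of N.\<close>
definition edge_on_T :: "word \<Rightarrow> letter \<Rightarrow> bool" where
  "edge_on_T w a \<longleftrightarrow>
     (\<exists>u p q. u \<in> NF_set \<and>
        ((u = p @ [a] @ q \<and> word_eq p w) \<or>
         (u = p @ [inv_letter a] @ q \<and> word_eq p (w @ [a]))))"

fun blocks :: "word \<Rightarrow> word list" where
  "blocks [] = [[]]"
| "blocks (a # w) = (let bs = blocks w in
     if fst a = Y then [] # bs else (a # hd bs) # tl bs)"

definition xsum :: "word \<Rightarrow> int" where
  "xsum b = (\<Sum>a\<leftarrow>b. if fst a = X then (if snd a then 1 else -1) else 0)"

definition ylen :: "word \<Rightarrow> nat" where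
  "ylen w = length (filter (\<lambda>a. fst a = Y) w)"

text \<open>i_k: the x-exponent of the k-th block counted from the right (k = 0 is rightmost).\<close>
definition iexp :: "word \<Rightarrow> nat \<Rightarrow> int" where
  "iexp w k = xsum (rev (blocks w) ! k)"

definition psum :: "word \<Rightarrow> nat \<Rightarrow> int" where
  "psum w k = (\<Sum>j\<le>k. iexp w j)"

definition mindex :: "word \<Rightarrow> int \<Rightarrow> nat" where
  "mindex w c = (if \<exists>k\<le>ylen w. psum w k \<le> c
                 then (LEAST k. k \<le> ylen w \<and> psum w k \<le> c) else ylen w)"

end

theory Submission
  imports Defs
begin


type_synonym st = "int \<times> (bool \<times> int) list"

fun Ys :: "st \<Rightarrow> st" where
  "Ys (a, []) = (0, [(True, a)])"
| "Ys (a, (e,i)#L) = (if a \<ge> 1 then (let r = Ys (i + a, L) in (a+1, (e, fst r - a - 1) # snd r))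
     else if \<not> e \<and> a = 0 then (i, L) else (0, (True, a) # (e,i) # L))"

fun Yis :: "st \<Rightarrow> st" where
  "Yis (a, []) = (0, [(False, a)])"
| "Yis (a, (e,i)#L) = (if a \<ge> 2 then (let r = Yis (i + a, L) in (a - 1, (e, fst r - a + 1) # snd r))
     else if e \<and> a = 0 then (i, L) else (0, (False, a) # (e,i) # L))"

definition Xs :: "int \<Rightarrow> st \<Rightarrow> st" where
  "Xs k s = (fst s + k, snd s)"

fun vl :: "(bool \<times> int) list \<Rightarrow> bool" where
  "vl [] = True"
| "vl [_] = True"
| "vl ((e,i)#(e',i')#L) = (i \<le> (if e then 0 else 1) \<and> (e' \<noteq> e \<longrightarrow> i \<noteq> 0) \<and> vl ((e',i')#L))"

lemma vl_tl: "vl (x#L) \<Longrightarrow> vl L"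
  by (cases x; cases L) auto

lemma Ys_valid: "vl L \<Longrightarrow> vl (snd (Ys (a, L)))"
proof (induction L arbitrary: a)
  case Nil then show ?case by simp
next
  case (Cons p L)
  obtain e i where p: "p = (e,i)" by (cases p)
  show ?case
  proof (cases "a \<ge> 1")
    case True
    have ih: "vl (snd (Ys (i + a, L)))" using Cons vl_tl p by blast
    show ?thesis
    proof (cases L)
      case Nil then show ?thesis using True p by simp
    next
      case (Cons q L3)
      obtain e' i' where q: "q = (e',i')" by (cases q)
      show ?thesis
      proof (cases "i + a \<ge> 1")
        case True
        then show ?thesis using `a \<ge> 1` p Cons q ih `vl (p#L)` by (auto simp: Let_def)
      next
        case False
        show ?thesis
        proof (cases "\<not> e' \<and> i + a = 0")
          case True
          then show ?thesis using `a \<ge> 1` p Cons q ih `vl (p#L)` False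
            by (cases L3) (auto simp: Let_def)
        next
          case False2: False
          then show ?thesis using `a \<ge> 1` p Cons q ih `vl (p#L)` False
            by (auto simp: Let_def)
        qed
      qed
    qed
  next
    case False
    then show ?thesis using Cons.prems p by (cases L) auto
  qed
qed


lemma Yis_valid: "vl L \<Longrightarrow> vl (snd (Yis (a, L)))"
proof (induction L arbitrary: a)
  case Nil then show ?case by simp
next
  case (Cons p L)
  obtain e i where p: "p = (e,i)" by (cases p)
  show ?case
  proof (cases "a \<ge> 2")
    case True
    have ih: "vl (snd (Yis (i + a, L)))" using Cons vl_tl p by blast
    show ?thesis
    proof (cases L)
      case Nil then show ?thesis using True p by simp
    next
      case (Cons q L3)
      obtain e' i' where q: "q = (e',i')" by (cases q)
      show ?thesis
      proof (cases "i + a \<ge> 2")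
        case True
        then show ?thesis using `a \<ge> 2` p Cons q ih `vl (p#L)` by (auto simp: Let_def)
      next
        case False
        show ?thesis
        proof (cases "e' \<and> i + a = 0")
          case True
          then show ?thesis using `a \<ge> 2` p Cons q ih `vl (p#L)` False
            by (cases L3) (auto simp: Let_def)
        next
          case False2: False
          then show ?thesis using `a \<ge> 2` p Cons q ih `vl (p#L)` False
            by (auto simp: Let_def)
        qed
      qed
    qed
  next
    case False
    then show ?thesis using Cons.prems p by (cases L) auto
  qed
qed


lemma Yis_Ys: "vl L \<Longrightarrow> Yis (Ys (a, L)) = (a, L)"
proof (induction L arbitrary: a)
  case Nil then show ?case by simp
next
  case (Cons p L)
  obtain e i where p: "p = (e,i)" by (cases p)
  show ?case
  proof (cases "a \<ge> 1")
    case True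
    have ih: "Yis (Ys (i + a, L)) = (i + a, L)" using Cons vl_tl p by blast
    obtain j M where r: "Ys (i + a, L) = (j, M)" by (cases "Ys (i + a, L)")
    show ?thesis using True ih r p by (simp add: Let_def)
  next
    case False
    then show ?thesis using Cons.prems p by (cases L) auto
  qed
qed

lemma Ys_Yis: "vl L \<Longrightarrow> Ys (Yis (a, L)) = (a, L)"
proof (induction L arbitrary: a)
  case Nil then show ?case by simp
next
  case (Cons p L)
  obtain e i where p: "p = (e,i)" by (cases p)
  show ?case
  proof (cases "a \<ge> 2")
    case True
    have ih: "Ys (Yis (i + a, L)) = (i + a, L)" using Cons vl_tl p by blast
    obtain j M where r: "Yis (i + a, L) = (j, M)" by (cases "Yis (i + a, L)")
    show ?thesis using True ih r p by (simp add: Let_def)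
  next
    case False
    then show ?thesis using Cons.prems p by (cases L) auto
  qed
qed


lemma Rplus: "i \<ge> 1 \<Longrightarrow> vl L \<Longrightarrow>
  Ys (Xs i (Ys (a, L))) = Xs (i+1) (Ys (Xs (-i-1) (Ys (Xs i (a, L)))))"
proof (induction L arbitrary: a)
  case Nil then show ?case by (simp add: Xs_def Let_def)
next
  case (Cons p L)
  obtain e c where p: "p = (e,c)" by (cases p)
  show ?case
  proof (cases "a \<ge> 1")
    case True
    have ih: "Ys (Xs i (Ys (c + a, L))) = Xs (i+1) (Ys (Xs (-i-1) (Ys (Xs i (c + a, L)))))"
      using Cons vl_tl p by blast
    obtain j M where r: "Ys (c + a, L) = (j, M)" by (cases "Ys (c + a, L)")
    obtain j3 M3 where r3: "Ys (c + (a + i), L) = (j3, M3)" by (cases "Ys (c + (a + i), L)")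
    have r3': "Ys (c + a + i, L) = (j3, M3)" using r3 by (simp add: add.assoc)
    obtain j2 M2 where r2: "Ys (j + i, M) = (j2, M2)" by (cases "Ys (j + i, M)")
    obtain j4 M4 where r4: "Ys (j3 - i - 1, M3) = (j4, M4)" by (cases "Ys (j3 - i - 1, M3)")
    have r4': "Ys (j3 + (- i - 1), M3) = (j4, M4)" using r4 by (simp add: algebra_simps)
    have e: "j2 = j4 + i + 1 \<and> M2 = M4" using ih r r2 r3' r4' by (simp add: Xs_def)
    show ?thesis using True Cons.prems r r2 r3 r4' e p by (simp add: Xs_def Let_def)
  next
    case False
    show ?thesis
    proof (cases "a + i \<ge> 1")
      case True
      obtain j M where r: "Ys (c + (a + i), L) = (j, M)" by (cases "Ys (c + (a + i), L)")
      obtain j2 M2 where r2: "Ys (c + i, L) = (j2, M2)" by (cases "Ys (c + i, L)")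
      show ?thesis using True False Cons.prems r r2 p by (auto simp add: Xs_def Let_def)
    next
      case False2: False
      show ?thesis
      proof (cases "\<not> e \<and> a + i = 0")
        case True
        then show ?thesis using False False2 Cons.prems p
          by (cases L) (auto simp add: Xs_def Let_def)
      next
        case False3: False
        then show ?thesis using False False2 Cons.prems p
          by (auto simp add: Xs_def Let_def)
      qed
    qed
  qed
qed


definition vs :: "st \<Rightarrow> bool" where "vs s = vl (snd s)"

lemma Xs_add[simp]: "Xs a (Xs b s) = Xs (b + a) s" by (simp add: Xs_def add.assoc)
lemma Xs_0[simp]: "Xs 0 s = s" by (simp add: Xs_def)
lemma vs_Xs[simp]: "vs (Xs k s) = vs s" by (simp add: Xs_def vs_def)
lemma vs_Ys[simp]: "vs s \<Longrightarrow> vs (Ys s)" by (cases s) (simp add: vs_def Ys_valid)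
lemma vs_Yis[simp]: "vs s \<Longrightarrow> vs (Yis s)" by (cases s) (simp add: vs_def Yis_valid)
lemma Yis_Ys'[simp]: "vs s \<Longrightarrow> Yis (Ys s) = s" by (cases s) (simp add: vs_def Yis_Ys)
lemma Ys_Yis'[simp]: "vs s \<Longrightarrow> Ys (Yis s) = s" by (cases s) (simp add: vs_def Ys_Yis)
lemma Rplus': "i \<ge> 1 \<Longrightarrow> vs s \<Longrightarrow>
  Ys (Xs i (Ys s)) = Xs (i+1) (Ys (Xs (-i-1) (Ys (Xs i s))))"
  by (cases s) (simp add: vs_def Rplus del: Xs_add)

lemma Rminus': assumes "i \<ge> 1" "vs g"
  shows "Ys (Xs i (Yis g)) = Xs (i+1) (Yis (Xs (-i-1) (Ys (Xs i g))))"
proof -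
  define h where "h = Yis g"
  have vh: "vs h" using assms h_def by simp
  have g: "g = Ys h" using assms h_def by simp
  have R: "Ys (Xs i (Ys h)) = Xs (i+1) (Ys (Xs (-i-1) (Ys (Xs i h))))"
    using Rplus' assms(1) vh by blast
  have "Xs (-i-1) (Ys (Xs i (Ys h))) = Ys (Xs (-i-1) (Ys (Xs i h)))"
    using R by simp
  then have "Yis (Xs (-i-1) (Ys (Xs i (Ys h)))) = Xs (-i-1) (Ys (Xs i h))"
    using vh by simp
  then show ?thesis unfolding h_def[symmetric] g[symmetric] using g by simp
qed

definition Ye :: "bool \<Rightarrow> st \<Rightarrow> st" where "Ye e s = (if e then Ys s else Yis s)"

lemma Ye_T[simp]: "Ye True s = Ys s" by (simp add: Ye_def)
lemma Ye_F[simp]: "Ye False s = Yis s" by (simp add: Ye_def)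

lemma vs_Ye[simp]: "vs s \<Longrightarrow> vs (Ye e s)" by (simp add: Ye_def)

lemma Rgen: "i \<ge> 1 \<Longrightarrow> vs g \<Longrightarrow>
  Ys (Xs i (Ye e g)) = Xs (i+1) (Ye e (Xs (-i-1) (Ys (Xs i g))))"
  using Rplus' Rminus' by (simp add: Ye_def)

lemma Rinv: assumes "i \<ge> 1" "vs h"
  shows "Yis (Xs (i+1) (Ye e h)) = Xs i (Ye e (Xs (-i) (Yis (Xs (i+1) h))))"
proof -
  define g where "g = Xs (-i) (Yis (Xs (i+1) h))"
  have vg: "vs g" using assms g_def by simp
  have "Ys (Xs i g) = Xs (i+1) h" using assms g_def by simp
  then have "Ys (Xs i (Ye e g)) = Xs (i+1) (Ye e h)" using Rgen[OF assms(1) vg, of e] by simp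
  then have "Yis (Xs (i+1) (Ye e h)) = Xs i (Ye e g)" using vg
    by (metis Yis_Ys' vs_Xs vs_Ye)
  then show ?thesis using g_def by simp
qed

fun act :: "st \<Rightarrow> letter \<Rightarrow> st" where
  "act s (X, b) = Xs (if b then 1 else -1) s"
| "act s (Y, b) = Ye b s"

lemma vs_act[simp]: "vs s \<Longrightarrow> vs (act s a)"
  by (cases a; cases "fst a") auto

lemma vs_foldl[simp]: "vs s \<Longrightarrow> vs (foldl act s w)"
  by (induction w arbitrary: s) auto

lemma foldl_rep: "foldl act s (replicate n (X, b)) = Xs (if b then int n else - int n) s"
  by (induction n arbitrary: s) (auto simp: replicate_append_same[symmetric] algebra_simps
      simp del: replicate_append_same)

lemma foldl_xpow[simp]: "foldl act s (xpow k) = Xs k s"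
  by (simp add: xpow_def foldl_rep)

lemma rule_ok: "(l, r) \<in> sigma_rules \<Longrightarrow> vs s \<Longrightarrow> foldl act s l = foldl act s r"
proof (induction rule: sigma_rules.induct)
  case (free_red a)
  obtain g b where a: "a = (g, b)" by (cases a)
  show ?case using free_red a by (cases g; cases b) (auto simp: inv_letter_def Ye_def)
next
  case (y_rule i e)
  then show ?case using Rgen[of i s e] by simp
next
  case (yinv_rule i e)
  then show ?case using Rinv[of i s e] by (simp add: Ye_def)
qed

lemma step_ok: "(u, v) \<in> sigma_step \<Longrightarrow> vs s \<Longrightarrow> foldl act s u = foldl act s v"
proof -
  assume "(u, v) \<in> sigma_step" "vs s"
  then obtain p l r q where "u = p @ l @ q" "v = p @ r @ q" "(l, r) \<in> sigma_rules"
    unfolding sigma_step_def by blast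
  then show ?thesis using rule_ok[of l r "foldl act s p"] vs_foldl[OF `vs s`] by simp
qed

definition ev :: "word \<Rightarrow> st" where "ev w = foldl act (0, []) w"

lemma vs_ev[simp]: "vs (ev w)" using vs_foldl[of "(0, [])" w] by (simp add: ev_def vs_def)

lemma word_eq_ev: "word_eq u v \<Longrightarrow> ev u = ev v"
  unfolding word_eq_def
proof (induction rule: rtrancl_induct)
  case base then show ?case by simp
next
  case (step y z)
  then show ?case using step_ok[of y z] step_ok[of z y] by (auto simp: ev_def vs_def)
qed


lemma we_refl[simp]: "word_eq u u" by (simp add: word_eq_def)
lemma we_sym: "word_eq u v \<Longrightarrow> word_eq v u"
  unfolding word_eq_def by (metis converse_Un converse_converse rtrancl_converseI sup_commute)
lemma we_trans[trans]: "word_eq u v \<Longrightarrow> word_eq v w \<Longrightarrow> word_eq u w"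
  unfolding word_eq_def by simp

lemma step_ctx: "(u, v) \<in> sigma_step \<Longrightarrow> (p @ u @ q, p @ v @ q) \<in> sigma_step"
  unfolding sigma_step_def by auto (metis append.assoc)

lemma we_ctx: "word_eq u v \<Longrightarrow> word_eq (p @ u @ q) (p @ v @ q)"
  unfolding word_eq_def
proof (induction rule: rtrancl_induct)
  case base then show ?case by simp
next
  case (step y z)
  then have "(p @ y @ q, p @ z @ q) \<in> sigma_step \<union> sigma_step\<inverse>" using step_ctx by auto
  then show ?case using step by (meson rtrancl.rtrancl_into_rtrancl)
qed

lemma we_ctxL: "word_eq u v \<Longrightarrow> word_eq (p @ u) (p @ v)" using we_ctx[of u v p "[]"] by simp
lemma we_ctxR: "word_eq u v \<Longrightarrow> word_eq (u @ q) (v @ q)" using we_ctx[of u v "[]" q] by simp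

lemma we_rule: "(l, r) \<in> sigma_rules \<Longrightarrow> word_eq (p @ l @ q) (p @ r @ q)"
  unfolding word_eq_def sigma_step_def by blast

lemma xpow_Suc: "k \<ge> 0 \<Longrightarrow> xpow (k + 1) = xpow k @ [(X, True)]"
  by (simp add: xpow_def nat_add_distrib replicate_append_same)
lemma xpow_neg: "k < 0 \<Longrightarrow> xpow k = xpow (k + 1) @ [(X, False)]"
proof -
  assume k: "k < 0"
  then have "nat (- k) = Suc (nat (- (k+1)))" by simp
  then show ?thesis using k by (simp add: xpow_def replicate_append_same)
qed
lemma xpow_pred: "k \<le> 0 \<Longrightarrow> xpow (k - 1) = xpow k @ [(X, False)]"
  using xpow_neg[of "k - 1"] by simp
lemma xpow_pos: "k > 0 \<Longrightarrow> xpow k = xpow (k - 1) @ [(X, True)]"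
  using xpow_Suc[of "k - 1"] by simp

lemma we_xT: "word_eq (xpow a @ [(X, True)]) (xpow (a + 1))"
proof (cases "a \<ge> 0")
  case True then show ?thesis by (simp add: xpow_Suc)
next
  case False
  then have "xpow a @ [(X, True)] = xpow (a+1) @ [(X, False), inv_letter (X, False)] @ []"
    by (simp add: xpow_neg inv_letter_def)
  then show ?thesis using we_rule[OF sigma_rules.free_red, of "xpow (a+1)" "(X, False)" "[]"] by simp
qed

lemma we_xF: "word_eq (xpow a @ [(X, False)]) (xpow (a - 1))"
proof (cases "a \<le> 0")
  case True then show ?thesis by (simp add: xpow_pred)
next
  case False
  then have "xpow a @ [(X, False)] = xpow (a - 1) @ [(X, True), inv_letter (X, True)] @ []"
    by (simp add: xpow_pos inv_letter_def)
  then show ?thesis using we_rule[OF sigma_rules.free_red, of "xpow (a - 1)" "(X, True)" "[]"] by simp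
qed

lemma we_xrepT: "word_eq (xpow a @ replicate n (X, True)) (xpow (a + int n))"
proof (induction n)
  case 0 then show ?case by simp
next
  case (Suc n)
  have "xpow a @ replicate (Suc n) (X, True) = (xpow a @ replicate n (X, True)) @ [(X, True)]"
    by (simp add: replicate_append_same[symmetric] del: replicate_append_same)
  moreover have "word_eq ((xpow a @ replicate n (X, True)) @ [(X, True)])
      (xpow (a + int n) @ [(X, True)])" using Suc we_ctxR by blast
  moreover have "word_eq (xpow (a + int n) @ [(X, True)]) (xpow (a + int (Suc n)))"
    using we_xT[of "a + int n"] by (metis add.assoc of_nat_Suc add.commute)
  ultimately show ?case using we_trans by metis
qed

lemma we_xrepF: "word_eq (xpow a @ replicate n (X, False)) (xpow (a - int n))"
proof (induction n)
  case 0 then show ?case by simp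
next
  case (Suc n)
  have "xpow a @ replicate (Suc n) (X, False) = (xpow a @ replicate n (X, False)) @ [(X, False)]"
    by (simp add: replicate_append_same[symmetric] del: replicate_append_same)
  moreover have "word_eq ((xpow a @ replicate n (X, False)) @ [(X, False)])
      (xpow (a - int n) @ [(X, False)])" using Suc we_ctxR by blast
  moreover have "word_eq (xpow (a - int n) @ [(X, False)]) (xpow (a - int (Suc n)))"
    using we_xF[of "a - int n"] by (metis diff_diff_eq of_nat_Suc add.commute)
  ultimately show ?case using we_trans by metis
qed

lemma we_xx: "word_eq (xpow a @ xpow b) (xpow (a + b))"
  using we_xrepT[of a "nat b"] we_xrepF[of a "nat (-b)"]
  by (cases "b \<ge> 0") (auto simp: xpow_def)

fun tw :: "st \<Rightarrow> word" where
  "tw (a, []) = xpow a"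
| "tw (a, (e,i)#L) = tw (i, L) @ [(Y,e)] @ xpow a"

lemma tw_0: "tw (a, L) = tw (0, L) @ xpow a"
  by (cases L) (auto simp: xpow_def)

lemma we_twx: "word_eq (tw (a, L) @ xpow b) (tw (a + b, L))"
  using we_ctxL[OF we_xx, of "tw (0, L)" a b] tw_0[of a L] tw_0[of "a+b" L] by simp

lemma we_Ys: "word_eq (tw (a, L) @ [(Y, True)]) (tw (Ys (a, L)))"
proof (induction L arbitrary: a)
  case Nil then show ?case by (simp add: xpow_def)
next
  case (Cons p L)
  obtain e i where p: "p = (e,i)" by (cases p)
  show ?case
  proof (cases "a \<ge> 1")
    case True
    obtain j M where r: "Ys (i + a, L) = (j, M)" by (cases "Ys (i + a, L)")
    have 1: "word_eq (tw (a, p # L) @ [(Y, True)])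
       (tw (i, L) @ (xpow a @ [(Y, True)] @ xpow (- a - 1) @ [(Y, e)] @ xpow (a + 1)) @ [])"
      using we_rule[OF sigma_rules.y_rule[OF True, of e], of "tw (i, L)" "[]"] p by simp
    have 2: "word_eq (tw (i, L) @ xpow a) (tw (i + a, L))" by (rule we_twx)
    have 3: "word_eq (tw (i + a, L) @ [(Y, True)]) (tw (j, M))" using Cons.IH r by metis
    have 4: "word_eq (tw (j, M) @ xpow (- a - 1)) (tw (j - a - 1, M))" proof -
      have e: "tw (j + (- a - 1), M) = tw (j - a - 1, M)" by (simp add: algebra_simps)
      show ?thesis using we_twx[of j M "- a - 1"] by (simp only: e)
    qed
    have "word_eq (tw (i, L) @ (xpow a @ [(Y, True)] @ xpow (- a - 1) @ [(Y, e)] @ xpow (a + 1)) @ [])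
       (tw (i + a, L) @ [(Y, True)] @ xpow (- a - 1) @ [(Y, e)] @ xpow (a + 1))"
      using we_ctxR[OF 2, of "[(Y, True)] @ xpow (- a - 1) @ [(Y, e)] @ xpow (a + 1)"] by simp
    also have "word_eq \<dots> (tw (j, M) @ xpow (- a - 1) @ [(Y, e)] @ xpow (a + 1))"
      using we_ctxR[OF 3, of "xpow (- a - 1) @ [(Y, e)] @ xpow (a + 1)"] by simp
    also have "word_eq \<dots> (tw (j - a - 1, M) @ [(Y, e)] @ xpow (a + 1))"
      using we_ctxR[OF 4, of "[(Y, e)] @ xpow (a + 1)"] by simp
    finally have 5: "word_eq (tw (i, L) @ (xpow a @ [(Y, True)] @ xpow (- a - 1) @ [(Y, e)] @ xpow (a + 1)) @ [])
       (tw (j - a - 1, M) @ [(Y, e)] @ xpow (a + 1))" .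
    show ?thesis using we_trans[OF 1 5] True p r by (simp add: Let_def)
  next
    case False
    show ?thesis
    proof (cases "\<not> e \<and> a = 0")
      case True
      then have "tw (a, p # L) @ [(Y, True)] = tw (i, L) @ [(Y, False), inv_letter (Y, False)] @ []"
        using p by (simp add: xpow_def inv_letter_def)
      then show ?thesis using we_rule[OF sigma_rules.free_red, of "tw (i, L)" "(Y, False)" "[]"] True p
        by simp
    next
      case False2: False
      then show ?thesis using False p by (cases e) (simp_all add: xpow_def)
    qed
  qed
qed


lemma we_Yis: "word_eq (tw (a, L) @ [(Y, False)]) (tw (Yis (a, L)))"
proof (induction L arbitrary: a)
  case Nil then show ?case by (simp add: xpow_def)
next
  case (Cons p L)
  obtain e i where p: "p = (e,i)" by (cases p)
  show ?case
  proof (cases "a \<ge> 2")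
    case True
    have a1: "a - 1 \<ge> 1" using True by simp
    obtain j M where r: "Yis (i + a, L) = (j, M)" by (cases "Yis (i + a, L)")
    have 1: "word_eq (tw (a, p # L) @ [(Y, False)])
       (tw (i, L) @ (xpow a @ [(Y, False)] @ xpow (- (a - 1)) @ [(Y, e)] @ xpow (a - 1)) @ [])"
      using we_rule[OF sigma_rules.yinv_rule[OF a1, of e], of "tw (i, L)" "[]"] p by simp
    have 2: "word_eq (tw (i, L) @ xpow a) (tw (i + a, L))" by (rule we_twx)
    have 3: "word_eq (tw (i + a, L) @ [(Y, False)]) (tw (j, M))" using Cons.IH r by metis
    have 4: "word_eq (tw (j, M) @ xpow (- (a - 1))) (tw (j - a + 1, M))"
    proof -
      have e: "tw (j + (- (a - 1)), M) = tw (j - a + 1, M)" by (simp add: algebra_simps)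
      show ?thesis using we_twx[of j M "- (a - 1)"] by (simp only: e)
    qed
    have "word_eq (tw (i, L) @ (xpow a @ [(Y, False)] @ xpow (- (a - 1)) @ [(Y, e)] @ xpow (a - 1)) @ [])
       (tw (i + a, L) @ [(Y, False)] @ xpow (- (a - 1)) @ [(Y, e)] @ xpow (a - 1))"
      using we_ctxR[OF 2, of "[(Y, False)] @ xpow (- (a - 1)) @ [(Y, e)] @ xpow (a - 1)"] by simp
    also have "word_eq \<dots> (tw (j, M) @ xpow (- (a - 1)) @ [(Y, e)] @ xpow (a - 1))"
      using we_ctxR[OF 3, of "xpow (- (a - 1)) @ [(Y, e)] @ xpow (a - 1)"] by simp
    also have "word_eq \<dots> (tw (j - a + 1, M) @ [(Y, e)] @ xpow (a - 1))"
      using we_ctxR[OF 4, of "[(Y, e)] @ xpow (a - 1)"] by simp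
    finally have 5: "word_eq (tw (i, L) @ (xpow a @ [(Y, False)] @ xpow (- (a - 1)) @ [(Y, e)] @ xpow (a - 1)) @ [])
       (tw (j - a + 1, M) @ [(Y, e)] @ xpow (a - 1))" .
    show ?thesis using we_trans[OF 1 5] True p r by (simp add: Let_def)
  next
    case False
    show ?thesis
    proof (cases "e \<and> a = 0")
      case True
      then have "tw (a, p # L) @ [(Y, False)] = tw (i, L) @ [(Y, True), inv_letter (Y, True)] @ []"
        using p by (simp add: xpow_def inv_letter_def)
      then show ?thesis using we_rule[OF sigma_rules.free_red, of "tw (i, L)" "(Y, True)" "[]"] True p
        by simp
    next
      case False2: False
      then show ?thesis using False p by (cases e) (simp_all add: xpow_def)
    qed
  qed
qed

lemma we_act: "word_eq (tw s @ [a]) (tw (act s a))"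
proof -
  obtain b L where s: "s = (b, L)" by (cases s)
  obtain g c where a: "a = (g, c)" by (cases a)
  show ?thesis
  proof (cases g)
    case X
    have "[(X, c)] = xpow (if c then 1 else -1)" by (simp add: xpow_def)
    then have "tw s @ [a] = tw (b, L) @ xpow (if c then 1 else -1)" using s a X by simp
    then show ?thesis using we_twx[of b L "if c then 1 else -1"] s a X by (simp add: Xs_def)
  next
    case Y
    then show ?thesis using we_Ys we_Yis s a by (cases c) auto
  qed
qed

lemma we_ev: "word_eq w (tw (ev w))"
proof (induction w rule: rev_induct)
  case Nil then show ?case by (simp add: ev_def xpow_def)
next
  case (snoc a w)
  have "word_eq (w @ [a]) (tw (ev w) @ [a])" using snoc we_ctxR by blast
  also have "word_eq \<dots> (tw (act (ev w) a))" by (rule we_act)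
  finally show ?case by (simp add: ev_def)
qed


lemma red: "(l, r) \<in> sigma_rules \<Longrightarrow> p @ l @ q \<notin> NF_set"
  unfolding NF_set_def sigma_step_def by blast

lemma lhs_ne: "(l, r) \<in> sigma_rules \<Longrightarrow> l \<noteq> []"
  by (induction rule: sigma_rules.induct) auto

definition ends_lhs :: "word \<Rightarrow> bool" where
  "ends_lhs u = (\<exists>p l r. u = p @ l \<and> (l, r) \<in> sigma_rules)"

lemma NF_Nil: "[] \<in> NF_set"
  unfolding NF_set_def sigma_step_def using lhs_ne by auto

lemma NF_snoc: "w @ [a] \<in> NF_set \<longleftrightarrow> w \<in> NF_set \<and> \<not> ends_lhs (w @ [a])"
proof
  assume h: "w @ [a] \<in> NF_set"
  have "w \<in> NF_set"
  proof (rule ccontr)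
    assume "w \<notin> NF_set"
    then obtain p l r q where "w = p @ l @ q" "(l, r) \<in> sigma_rules"
      unfolding NF_set_def sigma_step_def by blast
    then show False using h red[of l r p "q @ [a]"] by simp
  qed
  moreover have "\<not> ends_lhs (w @ [a])"
    using h red[of _ _ _ "[]"] unfolding ends_lhs_def by fastforce
  ultimately show "w \<in> NF_set \<and> \<not> ends_lhs (w @ [a])" by blast
next
  assume h: "w \<in> NF_set \<and> \<not> ends_lhs (w @ [a])"
  show "w @ [a] \<in> NF_set"
  proof (rule ccontr)
    assume "w @ [a] \<notin> NF_set"
    then obtain p l r q where d: "w @ [a] = p @ l @ q" "(l, r) \<in> sigma_rules"
      unfolding NF_set_def sigma_step_def by blast
    show False
    proof (cases q rule: rev_cases)
      case Nil then show ?thesis using d h unfolding ends_lhs_def by auto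
    next
      case (snoc q' b)
      then have "w = p @ l @ q'" using d by simp
      then show ?thesis using h red[OF d(2)] by blast
    qed
  qed
qed

lemma set_xpow: "x \<in> set (xpow k) \<Longrightarrow> fst x = X"
  by (auto simp: xpow_def split: if_splits)

lemma xpow_inj: assumes "xpow i = xpow k" shows "i = k"
proof -
  have l: "length (xpow i) = nat \<bar>i\<bar>" for i by (simp add: xpow_def)
  have h: "xpow i \<noteq> [] \<Longrightarrow> hd (xpow i) = (X, i > 0)" for i by (auto simp: xpow_def)
  have "nat \<bar>i\<bar> = nat \<bar>k\<bar>" using l[of i] l[of k] assms by simp
  then have a: "\<bar>i\<bar> = \<bar>k\<bar>" by simp
  show ?thesis
  proof (cases "i = 0")
    case True then show ?thesis using a by simp
  next
    case False
    then have "xpow i \<noteq> []" using l[of i] by auto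
    then have "(i > 0) = (k > 0)" using h[of i] h[of k] assms by simp
    then show ?thesis using a by linarith
  qed
qed

lemma ends_lhs_cases: "ends_lhs (w @ [a]) \<Longrightarrow>
   (\<exists>p. w = p @ [inv_letter a]) \<or>
   (\<exists>p e k c. a = (Y, c) \<and> w = p @ [(Y, e)] @ xpow k \<and> k \<ge> 1 \<and> (\<not> c \<longrightarrow> k \<ge> 2))"
proof -
  assume "ends_lhs (w @ [a])"
  then obtain p l r where d: "w @ [a] = p @ l" "(l, r) \<in> sigma_rules" unfolding ends_lhs_def by blast
  from d(2) show ?thesis
  proof cases
    case (free_red b)
    then have "a = inv_letter b" "w = p @ [b]" using d(1) by auto
    moreover have "b = inv_letter a" using calculation by (simp add: inv_letter_def)
    ultimately show ?thesis by blast
  next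
    case (y_rule i e)
    then have "w @ [a] = (p @ [(Y, e)] @ xpow i) @ [(Y, True)]" using d(1) by simp
    then have "w = p @ [(Y, e)] @ xpow i" "a = (Y, True)" by (simp_all only: append1_eq_conv)
    then show ?thesis using y_rule by blast
  next
    case (yinv_rule i e)
    then have "w @ [a] = (p @ [(Y, e)] @ xpow (i + 1)) @ [(Y, False)]" using d(1) by simp
    then have "w = p @ [(Y, e)] @ xpow (i + 1)" "a = (Y, False)" by (simp_all only: append1_eq_conv)
    then show ?thesis using yinv_rule by (metis add_increasing2 one_add_one add_right_mono zero_le_one)
  qed
qed

lemma lastP: "xs @ y # ys = xs' @ y' # ys' \<Longrightarrow> P y \<Longrightarrow> P y' \<Longrightarrow>
    (\<forall>x\<in>set xs. \<not> P x) \<Longrightarrow> (\<forall>x\<in>set xs'. \<not> P x) \<Longrightarrow> xs = xs'"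
proof (induction xs arbitrary: xs')
  case Nil
  show ?case
  proof (cases xs')
    case Nil then show ?thesis by simp
  next
    case (Cons z zs)
    then have "z = y" using Nil.prems(1) by simp
    then show ?thesis using Nil.prems(2,5) Cons by simp
  qed
next
  case (Cons x xs)
  show ?case
  proof (cases xs')
    case Nil
    then have "x = y'" using Cons.prems(1) by simp
    then show ?thesis using Cons.prems(3,4) by simp
  next
    case (Cons z zs)
    then have 1: "x = z" "xs @ y # ys = zs @ y' # ys'" using Cons.prems(1) by simp_all
    have "xs = zs"
      by (rule Cons.IH[OF 1(2) Cons.prems(2,3)]) (use Cons.prems(4,5) Cons in auto)
    then show ?thesis using 1 Cons by simp
  qed
qed

lemma lastY: assumes "u @ [(Y, e)] @ xpow i = u' @ [(Y, e')] @ xpow k" shows "i = k"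
proof -
  have "rev (xpow i) @ (Y, e) # rev u = rev (xpow k) @ (Y, e') # rev u'"
    using arg_cong[OF assms, of rev] by simp
  then have "rev (xpow i) = rev (xpow k)"
    by (rule lastP[where P = "\<lambda>x. fst x = Y"]) (auto dest: set_xpow)
  then show ?thesis using xpow_inj by simp
qed

lemma app_x: "w \<in> NF_set \<Longrightarrow> (\<forall>p. w \<noteq> p @ [(X, \<not> b)]) \<Longrightarrow> w @ replicate n (X, b) \<in> NF_set"
proof (induction n)
  case 0 then show ?case by simp
next
  case (Suc n)
  have eq: "w @ replicate (Suc n) (X, b) = (w @ replicate n (X, b)) @ [(X, b)]"
    by (simp add: replicate_append_same[symmetric] del: replicate_append_same)
  have "\<not> ends_lhs ((w @ replicate n (X, b)) @ [(X, b)])"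
  proof
    assume "ends_lhs ((w @ replicate n (X, b)) @ [(X, b)])"
    from ends_lhs_cases[OF this] obtain p where p: "w @ replicate n (X, b) = p @ [(X, \<not> b)]"
      by (auto simp: inv_letter_def)
    show False
    proof (cases n)
      case 0 then show ?thesis using p Suc.prems by simp
    next
      case (Suc m)
      then have "last (w @ replicate n (X, b)) = (X, b)" by simp
      then show ?thesis using p by simp
    qed
  qed
  then have "(w @ replicate n (X, b)) @ [(X, b)] \<in> NF_set" using Suc NF_snoc by blast
  then show ?case by (simp only: eq)
qed

lemma app_xpow: assumes "w \<in> NF_set" "w = [] \<or> fst (last w) = Y" shows "w @ xpow k \<in> NF_set"
proof -
  have "\<forall>p. w \<noteq> p @ [(X, c)]" for c
  proof (intro allI notI)
    fix p assume "w = p @ [(X, c)]"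
    then show False using assms(2) by simp
  qed
  then show ?thesis unfolding xpow_def using app_x[OF assms(1)] by simp
qed




lemma tw_NF: "vl L \<Longrightarrow> tw (a, L) \<in> NF_set"
proof (induction L arbitrary: a)
  case Nil then show ?case using app_xpow[OF NF_Nil] by simp
next
  case (Cons p L)
  obtain e i where p: "p = (e,i)" by (cases p)
  have ih: "tw (i, L) \<in> NF_set" using Cons vl_tl p by blast
  have "\<not> ends_lhs (tw (i, L) @ [(Y, e)])"
  proof
    assume "ends_lhs (tw (i, L) @ [(Y, e)])"
    from ends_lhs_cases[OF this]
    have "(\<exists>q. tw (i, L) = q @ [(Y, \<not> e)]) \<or>
      (\<exists>q e'' k. tw (i, L) = q @ [(Y, e'')] @ xpow k \<and> k \<ge> 1 \<and> (\<not> e \<longrightarrow> k \<ge> 2))"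
      by (simp add: inv_letter_def)
    then show False
    proof (elim disjE exE conjE)
      fix q assume inv: "tw (i, L) = q @ [(Y, \<not> e)]"
      show False
      proof (cases L)
        case Nil
        then have "(Y, \<not> e) \<in> set (xpow i)" using inv by simp
        then show False using set_xpow by fastforce
      next
        case (Cons q' L')
        obtain e' i' where q': "q' = (e', i')" by (cases q')
        have eq: "tw (i', L') @ [(Y, e')] @ xpow i = q @ [(Y, \<not> e)]" using inv Cons q' by simp
        show False
        proof (cases "xpow i = []")
          case True
          then have "i = 0" using xpow_inj[of i 0] by (simp add: xpow_def)
          moreover have "e' = (\<not> e)" using eq True by simp
          moreover have "e' \<noteq> e \<longrightarrow> i \<noteq> 0" using `vl (p # L)` p Cons q' by simp
          ultimately show False by simp
        next
          case False
          have "last (tw (i', L') @ [(Y, e')] @ xpow i) = (Y, \<not> e)" using eq by simp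
          then have "last (xpow i) = (Y, \<not> e)" using False by simp
          moreover have "last (xpow i) \<in> set (xpow i)" using False by simp
          ultimately show False using set_xpow by fastforce
        qed
      qed
    next
      fix q e'' k assume yy: "tw (i, L) = q @ [(Y, e'')] @ xpow k" "k \<ge> 1" "\<not> e \<longrightarrow> k \<ge> 2"
      show False
      proof (cases L)
        case Nil
        then have "(Y, e'') \<in> set (xpow i)" using yy by simp
        then show False using set_xpow by fastforce
      next
        case (Cons q' L')
        obtain e' i' where q': "q' = (e', i')" by (cases q')
        have "tw (i', L') @ [(Y, e')] @ xpow i = q @ [(Y, e'')] @ xpow k" using yy Cons q' by simp
        then have "i = k" by (rule lastY)
        moreover have "i \<le> (if e then 0 else 1)" using `vl (p # L)` p Cons q' by simp
        ultimately show False using yy by (cases e) simp_all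
      qed
    qed
  qed
  then have "tw (i, L) @ [(Y, e)] \<in> NF_set" using ih NF_snoc by blast
  then have "(tw (i, L) @ [(Y, e)]) @ xpow a \<in> NF_set" by (rule app_xpow) simp
  then show ?case using p by simp
qed


lemma vs_NF: "vs s \<Longrightarrow> tw s \<in> NF_set"
  by (cases s) (simp add: vs_def tw_NF)

lemma act_NF: assumes "tw s @ [a] \<in> NF_set" shows "tw (act s a) = tw s @ [a]"
proof -
  obtain b L where s: "s = (b, L)" by (cases s)
  obtain g c where a: "a = (g, c)" by (cases a)
  show ?thesis
  proof (cases g)
    case X
    show ?thesis
    proof (cases c)
      case True
      show ?thesis
      proof (cases "b \<ge> 0")
        case True2: True
        have "tw (b + 1, L) = tw (0, L) @ xpow (b + 1)" by (rule tw_0)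
        also have "\<dots> = tw (0, L) @ xpow b @ [(X, True)]" using xpow_Suc[OF True2] by simp
        finally show ?thesis using s a X True tw_0[of b L] by (simp add: Xs_def)
      next
        case False
        then have "tw s @ [a] = (tw (0, L) @ xpow (b + 1)) @ [(X, False), inv_letter (X, False)] @ []"
          using s a X True tw_0[of b L] xpow_neg[of b] by (simp add: inv_letter_def)
        then show ?thesis using assms red[OF sigma_rules.free_red] by metis
      qed
    next
      case False
      show ?thesis
      proof (cases "b \<le> 0")
        case True2: True
        have "tw (b - 1, L) = tw (0, L) @ xpow (b - 1)" by (rule tw_0)
        also have "\<dots> = tw (0, L) @ xpow b @ [(X, False)]" using xpow_pred[OF True2] by simp
        finally show ?thesis using s a X False tw_0[of b L] by (simp add: Xs_def)
      next
        case False2: False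
        then have "tw s @ [a] = (tw (0, L) @ xpow (b - 1)) @ [(X, True), inv_letter (X, True)] @ []"
          using s a X False tw_0[of b L] xpow_pos[of b] by (simp add: inv_letter_def)
        then show ?thesis using assms red[OF sigma_rules.free_red] by metis
      qed
    qed
  next
    case Y
    show ?thesis
    proof (cases L)
      case Nil then show ?thesis using s a Y by (cases c) (simp_all add: xpow_def)
    next
      case (Cons q L')
      obtain e i where q: "q = (e, i)" by (cases q)
      show ?thesis
      proof (cases c)
        case True
        show ?thesis
        proof (cases "b \<ge> 1")
          case True2: True
          have "tw s @ [a] = tw (i, L') @ ([(Y, e)] @ xpow b @ [(Y, True)]) @ []"
            using s a Y True Cons q by simp
          then show ?thesis using assms red[OF sigma_rules.y_rule[OF True2]] by metis
        next
          case False2: False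
          show ?thesis
          proof (cases "\<not> e \<and> b = 0")
            case True3: True
            have "tw s @ [a] = tw (i, L') @ [(Y, False), inv_letter (Y, False)] @ []"
              using s a Y True Cons q True3 by (simp add: xpow_def inv_letter_def)
            then show ?thesis using assms red[OF sigma_rules.free_red] by metis
          next
            case False3: False
            then show ?thesis using s a Y True Cons q False2 by (simp add: xpow_def)
          qed
        qed
      next
        case False
        show ?thesis
        proof (cases "b \<ge> 2")
          case True2: True
          have b1: "b - 1 \<ge> 1" using True2 by simp
          have "tw s @ [a] = tw (i, L') @ ([(Y, e)] @ xpow (b - 1 + 1) @ [(Y, False)]) @ []"
            using s a Y False Cons q by simp
          then show ?thesis using assms red[OF sigma_rules.yinv_rule[OF b1]] by metis
        next
          case False2: False
          show ?thesis
          proof (cases "e \<and> b = 0")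
            case True3: True
            have "tw s @ [a] = tw (i, L') @ [(Y, True), inv_letter (Y, True)] @ []"
              using s a Y False Cons q True3 by (simp add: xpow_def inv_letter_def)
            then show ?thesis using assms red[OF sigma_rules.free_red] by metis
          next
            case False3: False
            then show ?thesis using s a Y False Cons q False2 by (simp add: xpow_def)
          qed
        qed
      qed
    qed
  qed
qed

lemma NF_ev: "w \<in> NF_set \<Longrightarrow> tw (ev w) = w"
proof (induction w rule: rev_induct)
  case Nil then show ?case by (simp add: ev_def xpow_def)
next
  case (snoc a w)
  then have w: "w \<in> NF_set" using NF_snoc by blast
  then have "tw (ev w) = w" using snoc by blast
  then have "tw (act (ev w) a) = w @ [a]" using act_NF snoc.prems by metis
  then show ?case by (simp add: ev_def)
qed

lemma nf_eq: "nf w = tw (ev w)"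
  unfolding nf_def
proof (rule the_equality)
  show "tw (ev w) \<in> NF_set \<and> word_eq w (tw (ev w))" using vs_NF[OF vs_ev] we_ev by blast
next
  fix v assume "v \<in> NF_set \<and> word_eq w v"
  then show "v = tw (ev w)" using NF_ev word_eq_ev by metis
qed


lemma blocks_ne: "blocks w \<noteq> []"
  by (induction w) (auto simp: Let_def)

lemma blocks_Y: "blocks (u @ (Y, e) # v) = blocks u @ blocks v"
proof (induction u)
  case Nil then show ?case by simp
next
  case (Cons b u)
  have "blocks u \<noteq> []" by (rule blocks_ne)
  then show ?case using Cons by (cases "blocks u") (auto simp: Let_def)
qed

lemma blocks_xfree: "(\<forall>x\<in>set v. fst x \<noteq> Y) \<Longrightarrow> blocks v = [v]"
  by (induction v) (auto simp: Let_def)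

lemma blocks_xpow: "blocks (xpow k) = [xpow k]"
  using set_xpow by (intro blocks_xfree) fastforce

lemma xsum_xpow: "xsum (xpow k) = k"
  by (auto simp: xsum_def xpow_def sum_list_replicate)

lemma rb_Nil: "rev (blocks (tw (a, []))) = [xpow a]"
  by (simp add: blocks_xpow)

declare tw.simps[simp del]

lemma rb_Cons: "rev (blocks (tw (a, (e, i) # L))) = xpow a # rev (blocks (tw (i, L)))"
  by (simp add: tw.simps blocks_Y blocks_xpow)

lemma iexp_0: "iexp (tw (a, L)) 0 = a"
  by (cases L) (auto simp: iexp_def rb_Cons rb_Nil xsum_xpow)

lemma iexp_Suc_Cons: "iexp (tw (a, (e, i) # L)) (Suc k) = iexp (tw (i, L)) k"
  by (simp add: iexp_def rb_Cons)

lemma iexp_Suc: "iexp (tw (a, L)) (Suc k) = iexp (tw (b, L)) (Suc k)"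
  by (cases L) (auto simp: iexp_def rb_Cons rb_Nil)

lemma psum_0: "psum (tw (a, L)) 0 = a"
  by (simp add: psum_def iexp_0)

lemma psum_shift: "psum (tw (a, L)) k = a + psum (tw (0, L)) k"
proof -
  have "psum (tw (a, L)) k = iexp (tw (a, L)) 0 + (\<Sum>j<k. iexp (tw (a, L)) (Suc j))"
    unfolding psum_def by (rule sum.atMost_shift)
  moreover have "psum (tw (0, L)) k = iexp (tw (0, L)) 0 + (\<Sum>j<k. iexp (tw (0, L)) (Suc j))"
    unfolding psum_def by (rule sum.atMost_shift)
  ultimately show ?thesis using iexp_Suc[of a L _ 0] by (simp add: iexp_0)
qed

lemma psum_Suc_Cons: "psum (tw (a, (e, i) # L)) (Suc k) = psum (tw (a + i, L)) k"
proof -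
  have "psum (tw (a, (e, i) # L)) (Suc k) = iexp (tw (a, (e, i) # L)) 0 + (\<Sum>j<Suc k. iexp (tw (a, (e, i) # L)) (Suc j))"
    unfolding psum_def by (rule sum.atMost_shift)
  also have "\<dots> = a + psum (tw (i, L)) k"
    by (simp add: iexp_0 iexp_Suc_Cons psum_def lessThan_Suc_atMost)
  finally show ?thesis using psum_shift[of i L k] psum_shift[of "a + i" L k] by simp
qed

lemma ylen_tw: "ylen (tw (a, L)) = length L"
proof (induction L arbitrary: a)
  case Nil then show ?case using set_xpow by (fastforce simp: ylen_def filter_empty_conv tw.simps)
next
  case (Cons p L)
  obtain e i where p: "p = (e, i)" by (cases p)
  have "filter (\<lambda>a. fst a = Y) (xpow a) = []" using set_xpow by (fastforce simp: filter_empty_conv)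
  then show ?case using Cons.IH[of i] p by (simp add: ylen_def tw.simps)
qed

lemma mindex_Nil: "mindex (tw (a, [])) c = 0"
  by (simp add: mindex_def ylen_tw)

lemma mindex_Cons: "mindex (tw (a, (e, i) # L)) c =
   (if a \<le> c then 0 else Suc (mindex (tw (a + i, L)) c))"
proof (cases "a \<le> c")
  case True
  then have "psum (tw (a, (e, i) # L)) 0 \<le> c" by (simp add: psum_0)
  then show ?thesis using True unfolding mindex_def by (auto intro: Least_eq_0)
next
  case False
  let ?w = "tw (a, (e, i) # L)" and ?v = "tw (a + i, L)"
  have P0: "\<not> psum ?w 0 \<le> c" using False by (simp add: psum_0)
  have ex: "(\<exists>k\<le>ylen ?w. psum ?w k \<le> c) \<longleftrightarrow> (\<exists>k\<le>ylen ?v. psum ?v k \<le> c)"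
  proof
    assume "\<exists>k\<le>ylen ?w. psum ?w k \<le> c"
    then obtain k where k: "k \<le> ylen ?w" "psum ?w k \<le> c" by blast
    then obtain k' where "k = Suc k'" using P0 by (cases k) auto
    then show "\<exists>k\<le>ylen ?v. psum ?v k \<le> c" using k by (auto simp: ylen_tw psum_Suc_Cons)
  next
    assume "\<exists>k\<le>ylen ?v. psum ?v k \<le> c"
    then obtain k where k: "k \<le> ylen ?v" "psum ?v k \<le> c" by blast
    then show "\<exists>k\<le>ylen ?w. psum ?w k \<le> c" by (intro exI[of _ "Suc k"]) (simp add: ylen_tw psum_Suc_Cons)
  qed
  show ?thesis
  proof (cases "\<exists>k\<le>ylen ?v. psum ?v k \<le> c")
    case True
    then obtain k where k: "k \<le> ylen ?w \<and> psum ?w k \<le> c" using ex by blast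
    have "(LEAST k. k \<le> ylen ?w \<and> psum ?w k \<le> c) =
        Suc (LEAST m. Suc m \<le> ylen ?w \<and> psum ?w (Suc m) \<le> c)"
      by (rule Least_Suc[where P = "\<lambda>k. k \<le> ylen ?w \<and> psum ?w k \<le> c", OF k]) (use P0 in simp)
    also have "\<dots> = Suc (LEAST m. m \<le> ylen ?v \<and> psum ?v m \<le> c)"
      by (simp add: ylen_tw psum_Suc_Cons)
    finally show ?thesis using True ex False unfolding mindex_def by simp
  next
    case False2: False
    have nw: "\<not> (\<exists>k\<le>ylen ?w. psum ?w k \<le> c)" using ex False2 by blast
    have "mindex ?w c = ylen ?w" using nw unfolding mindex_def by (simp only: if_False)
    moreover have "mindex ?v c = ylen ?v" using False2 unfolding mindex_def by (simp only: if_False)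
    ultimately show ?thesis using False by (simp add: ylen_tw)
  qed
qed

lemma main_st: "vl L \<Longrightarrow>
  mindex (tw (a, L)) 0 = mindex (tw (Ys (a, L))) 1 \<and>
  (\<forall>k < mindex (tw (a, L)) 0. psum (tw (Ys (a, L))) k - 1 = psum (tw (a, L)) k)"
proof (induction L arbitrary: a)
  case Nil then show ?case by (simp add: mindex_Nil mindex_Cons)
next
  case (Cons p L)
  obtain e i where p: "p = (e, i)" by (cases p)
  show ?case
  proof (cases "a \<ge> 1")
    case True
    obtain j M where r: "Ys (i + a, L) = (j, M)" by (cases "Ys (i + a, L)")
    have ih: "mindex (tw (a + i, L)) 0 = mindex (tw (j, M)) 1 \<and>
      (\<forall>k < mindex (tw (a + i, L)) 0. psum (tw (j, M)) k - 1 = psum (tw (a + i, L)) k)"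
      using Cons.IH[of "i + a"] Cons.prems vl_tl p r by (simp add: add.commute)
    have ys: "Ys (a, (e, i) # L) = (a + 1, (e, j - a - 1) # M)" using True r by simp
    have m1: "mindex (tw (a, (e, i) # L)) 0 = Suc (mindex (tw (a + i, L)) 0)"
      using True by (simp add: mindex_Cons)
    have m2: "mindex (tw (a + 1, (e, j - a - 1) # M)) 1 = Suc (mindex (tw (j, M)) 1)"
      using True by (simp add: mindex_Cons)
    have ps: "psum (tw (a + 1, (e, j - a - 1) # M)) k - 1 = psum (tw (a, (e, i) # L)) k"
      if "k < mindex (tw (a, (e, i) # L)) 0" for k
    proof (cases k)
      case 0 then show ?thesis by (simp add: psum_0)
    next
      case (Suc k')
      then have "k' < mindex (tw (a + i, L)) 0" using that m1 by simp
      then show ?thesis using ih Suc by (simp add: psum_Suc_Cons)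
    qed
    show ?thesis using ys m1 m2 ih ps p by simp
  next
    case False
    have m1: "mindex (tw (a, (e, i) # L)) 0 = 0" using False by (simp add: mindex_Cons)
    have "mindex (tw (Ys (a, (e, i) # L))) 1 = 0"
    proof (cases "\<not> e \<and> a = 0")
      case True
      then have ys: "Ys (a, (e, i) # L) = (i, L)" by simp
      show ?thesis
      proof (cases L)
        case Nil then show ?thesis using ys by (simp add: mindex_Nil)
      next
        case (Cons q L')
        obtain e' i' where q: "q = (e', i')" by (cases q)
        have "i \<le> 1" using Cons.prems p Cons q True by (simp split: if_splits)
        then show ?thesis using ys Cons q by (simp add: mindex_Cons)
      qed
    next
      case False2: False
      then show ?thesis using False by (cases e) (simp_all add: mindex_Cons)
    qed
    then show ?thesis using m1 p by simp
  qed
qed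


theorem lemma4p1:
  fixes w :: word
  assumes "\<not> edge_on_T w (Y, True)"
  shows "mindex (nf w) 0 = mindex (nf (w @ [(Y, True)])) 1 \<and>
         (\<forall>k < mindex (nf w) 0.
            psum (nf (w @ [(Y, True)])) k - 1 = psum (nf w) k)"
proof -
  obtain a L where s: "ev w = (a, L)" by (cases "ev w")
  have v: "vl L" using vs_ev[of w] s by (simp add: vs_def)
  have "ev (w @ [(Y, True)]) = Ys (a, L)" using s by (simp add: ev_def)
  then have "nf (w @ [(Y, True)]) = tw (Ys (a, L))" by (simp add: nf_eq)
  moreover have "nf w = tw (a, L)" using s by (simp add: nf_eq)
  ultimately show ?thesis using main_st[OF v] by simp
qed


end
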